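(* Let $\tilde Q$ be the subgroup of $Q_C$ generated by the images of $A_1,\dots,A_m$. Then $\tilde Q$ is a malnormal subgroup of $Q_C$, i.e. for every $g\in Q_C\setminus\tilde Q$ one has $g^{-1}\tilde Qg\cap\tilde Q=\{1\}$.
   Context: Let $Q$ be a finitely generated recursively presented group with presentation $\langle Y\mid\mathcal{S}\rangle$, where $Y=\{y_1,\dots,y_m\}$ is finite, $\mathcal{S}$ is a recursive set of positive words over $Y$, and the empty word is not in $\mathcal{S}$. Let $C\ge1$ be an integer. For $i=1,\dots,m$ let $Y_{C,i}=\{a_{1,i},\dots,a_{C,i}\}$, $Y_C=\bigcup_iY_{C,i}$ (all letters distinct), $A_i=a_{1,i}\cdots a_{C,i}\in F(Y_C)$. For $r=r(y_1,\dots,y_m)\in\mathcal{S}$ let $r_C=r(A_1,\dots,A_m)$, $\mathcal{S}_C=\{r_C:r\in\mathcal{S}\}$, and $Q_C=\langle Y_C\mid\mathcal{S}_C\rangle$. *)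

theory Defs
  imports Main
begin

text \<open>Words in the free group on an alphabet of type 'a: lists of letters with
  an exponent flag (False = letter, True = inverse letter).\<close>
type_synonym 'a fword = "('a \<times> bool) list"

definition inv_word :: "'a fword \<Rightarrow> 'a fword" where
  "inv_word w = rev (map (\<lambda>(x, b). (x, \<not> b)) w)"

definition pos_word :: "'a list \<Rightarrow> 'a fword" where
  "pos_word w = map (\<lambda>x. (x, False)) w"

inductive pres_eq :: "'a fword set \<Rightarrow> 'a fword \<Rightarrow> 'a fword \<Rightarrow> bool" for R where
  refl: "pres_eq R w w"
| sym: "pres_eq R u v \<Longrightarrow> pres_eq R v u"
| trans: "pres_eq R u v \<Longrightarrow> pres_eq R v w \<Longrightarrow> pres_eq R u w"
| cancel: "pres_eq R (u @ [(x, b), (x, \<not> b)] @ v) (u @ v)"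
| rel: "r \<in> R \<Longrightarrow> pres_eq R (u @ r @ v) (u @ v)"

text \<open>Generators y_i of Q are indexed by i < m (0-based); the generator a_{j,i}
  of Q_C is the pair (j, i) with j < C, i < m.\<close>
definition A_word :: "nat \<Rightarrow> nat \<Rightarrow> (nat \<times> nat) list" where
  "A_word C i = map (\<lambda>j. (j, i)) [0..<C]"

definition rel_C :: "nat \<Rightarrow> nat list \<Rightarrow> (nat \<times> nat) list" where
  "rel_C C r = concat (map (A_word C) r)"

definition relators_C :: "nat \<Rightarrow> nat list set \<Rightarrow> (nat \<times> nat) fword set" where
  "relators_C C S = (\<lambda>r. pos_word (rel_C C r)) ` S"

definition is_word_YC :: "nat \<Rightarrow> nat \<Rightarrow> (nat \<times> nat) fword \<Rightarrow> bool" where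
  "is_word_YC C m w \<longleftrightarrow> (\<forall>((j, i), b) \<in> set w. j < C \<and> i < m)"

definition A_product :: "nat \<Rightarrow> (nat \<times> bool) list \<Rightarrow> (nat \<times> nat) fword" where
  "A_product C xs = concat (map (\<lambda>(i, e). if e then inv_word (pos_word (A_word C i))
                                            else pos_word (A_word C i)) xs)"

definition in_Qtilde :: "nat \<Rightarrow> nat \<Rightarrow> nat list set \<Rightarrow> (nat \<times> nat) fword \<Rightarrow> bool" where
  "in_Qtilde C m S w \<longleftrightarrow>
     (\<exists>xs. (\<forall>(i, e) \<in> set xs. i < m) \<and> pres_eq (relators_C C S) w (A_product C xs))"

end

theory Submission imports Defs begin

lemma pe_ctx: "pres_eq R u v \<Longrightarrow> pres_eq R (p @ u @ q) (p @ v @ q)"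
proof (induction rule: pres_eq.induct)
  case (refl w) then show ?case by (rule pres_eq.refl)
next
  case (sym u v) then show ?case by (blast intro: pres_eq.sym)
next
  case (trans u v w) then show ?case by (metis pres_eq.trans)
next
  case (cancel u x b v)
  then show ?case using pres_eq.cancel[of R "p@u" x b "v@q"] by simp
next
  case (rel r u v)
  then show ?case using pres_eq.rel[of r R "p@u" "v@q"] by simp
qed

lemma pe_app: "pres_eq R u u' \<Longrightarrow> pres_eq R v v' \<Longrightarrow> pres_eq R (u@v) (u'@v')"
  using pe_ctx[of R u u' "[]" v] pe_ctx[of R v v' u' "[]"] by (metis append_Nil append_Nil2 pres_eq.trans)

lemma inv_word_Cons: "inv_word (a # w) = inv_word w @ [(fst a, \<not> snd a)]"
  by (cases a) (simp add: inv_word_def)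

lemma inv_word_app: "inv_word (u @ w) = inv_word w @ inv_word u"
  by (simp add: inv_word_def)

lemma inv_inv_word[simp]: "inv_word (inv_word w) = w"
  by (induction w) (auto simp: inv_word_def)

lemma pe_inv_r: "pres_eq R (w @ inv_word w) []"
proof (induction w)
  case Nil then show ?case by (simp add: inv_word_def pres_eq.refl)
next
  case (Cons a w)
  obtain x b where a: "a = (x,b)" by (cases a)
  have 1: "pres_eq R ([a] @ (w @ inv_word w) @ [(x, \<not> b)]) ([a] @ [] @ [(x, \<not> b)])"
    by (rule pe_ctx[OF Cons])
  have 2: "pres_eq R ([] @ [(x,b),(x,\<not>b)] @ []) ([] @ [])" by (rule pres_eq.cancel)
  have 3: "(a # w) @ inv_word (a # w) = [a] @ (w @ inv_word w) @ [(x, \<not> b)]"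
    using a by (simp add: inv_word_Cons)
  have 4: "pres_eq R ([a] @ (w @ inv_word w) @ [(x, \<not> b)]) [(x,b),(x,\<not>b)]"
    using 1 a by simp
  have 5: "pres_eq R [(x,b),(x,\<not>b)] []" using 2 by simp
  show ?case unfolding 3 by (rule pres_eq.trans[OF 4 5])
qed

lemma pe_inv_l: "pres_eq R (inv_word w @ w) []"
  using pe_inv_r[of R "inv_word w"] by simp

datatype syl = Kl "nat \<times> nat" bool | Hs "(nat \<times> nat) fword set"

locale Lm = fixes C m :: nat and S :: "nat list set"
  assumes C1: "C \<ge> 1" and Sok: "\<forall>r\<in>S. set r \<subseteq> {..<m}"
begin

abbreviation "R \<equiv> relators_C C S"

definition cls :: "(nat\<times>nat) fword \<Rightarrow> (nat\<times>nat) fword set" where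
  "cls w = {v. pres_eq R w v}"
definition rep :: "(nat\<times>nat) fword set \<Rightarrow> (nat\<times>nat) fword" where
  "rep a = (SOME w. w \<in> a)"
definition triv where "triv u \<longleftrightarrow> pres_eq R u []"

lemma cls_eq: "cls u = cls v \<longleftrightarrow> pres_eq R u v"
proof
  assume "cls u = cls v"
  moreover have "v \<in> cls v" by (simp add: cls_def pres_eq.refl)
  ultimately show "pres_eq R u v" by (simp add: cls_def) blast
next
  assume h: "pres_eq R u v"
  show "cls u = cls v" unfolding cls_def
    using h by (blast intro: pres_eq.trans pres_eq.sym)
qed

lemma rep_cls: "pres_eq R u (rep (cls u))"
proof -
  have "u \<in> cls u" by (simp add: cls_def pres_eq.refl)
  then have "rep (cls u) \<in> cls u" unfolding rep_def by (rule someI)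
  then show ?thesis by (simp add: cls_def)
qed

lemma cls_rep[simp]: "cls (rep (cls u)) = cls u"
  using rep_cls cls_eq by (metis pres_eq.sym)

lemma triv_cls: "triv u \<longleftrightarrow> cls u = cls []"
  by (simp add: triv_def cls_eq)

lemma cls_app: "cls u = cls u' \<Longrightarrow> cls v = cls v' \<Longrightarrow> cls (u @ v) = cls (u' @ v')"
  by (simp add: cls_eq pe_app)

lemma cls_rep_app[simp]: "cls (rep (cls u) @ v) = cls (u @ v)"
  by (rule cls_app) simp_all
lemma cls_app_rep[simp]: "cls (v @ rep (cls u)) = cls (v @ u)"
  by (rule cls_app) simp_all
lemma cls_app_rep2[simp]: "cls (v @ rep (cls u) @ w) = cls (v @ u @ w)"
  by (rule cls_app) simp_all


lemma cls_app_rep3[simp]: "cls (x @ y @ rep (cls u)) = cls (x @ y @ u)"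
  using cls_app_rep[of "x @ y" u] by simp

lemma cls_cong_l: "cls x = cls y \<Longrightarrow> cls (u @ x) = cls (u @ y)"
  by (rule cls_app) simp_all
lemma cls_cong_r: "cls x = cls y \<Longrightarrow> cls (x @ u) = cls (y @ u)"
  by (rule cls_app) simp_all
lemma cls_triv_r: "cls x = cls [] \<Longrightarrow> cls (u @ x) = cls u"
  using cls_cong_l[of x "[]" u] by simp
lemma cls_triv_l: "cls x = cls [] \<Longrightarrow> cls (x @ u) = cls u"
  using cls_cong_r[of x "[]" u] by simp
lemma cls_cancel_l: "cls (u @ x) = cls (u @ y) \<Longrightarrow> cls x = cls y"
proof -
  assume h: "cls (u @ x) = cls (u @ y)"
  have "cls (inv_word u @ u @ x) = cls (inv_word u @ u @ y)"
    using cls_cong_l[OF h] by simp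
  moreover have "cls (inv_word u @ u) = cls []" by (simp add: cls_eq pe_inv_l)
  ultimately show ?thesis using cls_triv_l[of "inv_word u @ u"] by (metis append_assoc)
qed

definition Hgood :: "(nat\<times>nat) fword \<Rightarrow> bool" where
  "Hgood u \<longleftrightarrow> (\<exists>xs. (\<forall>(i,e)\<in>set xs. i < m) \<and> pres_eq R u (A_product C xs))"
definition Hcls :: "(nat\<times>nat) fword set \<Rightarrow> bool" where
  "Hcls a \<longleftrightarrow> (\<exists>u. a = cls u \<and> Hgood u \<and> cls u \<noteq> cls [])"

lemma Hgood_app: "Hgood u \<Longrightarrow> Hgood v \<Longrightarrow> Hgood (u @ v)"
  unfolding Hgood_def
proof (elim exE conjE)
  fix xs ys assume "\<forall>(i,e)\<in>set xs. i < m" "pres_eq R u (A_product C xs)"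
    "\<forall>(i,e)\<in>set ys. i < m" "pres_eq R v (A_product C ys)"
  then show "\<exists>xs. (\<forall>(i,e)\<in>set xs. i < m) \<and> pres_eq R (u @ v) (A_product C xs)"
    by (intro exI[of _ "xs @ ys"]) (auto simp: A_product_def intro: pe_app)
qed

lemma Hgood_cls: "cls u = cls v \<Longrightarrow> Hgood v \<Longrightarrow> Hgood u"
  unfolding Hgood_def cls_eq by (blast intro: pres_eq.trans)

fun red :: "syl list \<Rightarrow> bool" where
  "red (Hs a # Hs b # \<beta>) = False"
| "red (Kl t b # Kl t' b' # \<beta>) = ((t \<noteq> t' \<or> b' \<noteq> (\<not> b)) \<and> red (Kl t' b' # \<beta>))"
| "red (x # y # \<beta>) = red (y # \<beta>)"
| "red _ = True"

definition invar :: "syl list \<Rightarrow> bool" where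
  "invar \<omega> \<longleftrightarrow> red \<omega> \<and> (\<forall>a. Hs a \<in> set \<omega> \<longrightarrow> Hcls a)"

fun actH :: "(nat\<times>nat) fword \<Rightarrow> syl list \<Rightarrow> syl list" where
  "actH u (Hs a # \<beta>) = (if triv (u @ rep a) then \<beta> else Hs (cls (u @ rep a)) # \<beta>)"
| "actH u \<omega> = (if triv u then \<omega> else Hs (cls u) # \<omega>)"

fun kact :: "nat\<times>nat \<Rightarrow> bool \<Rightarrow> syl list \<Rightarrow> syl list" where
  "kact t b (Kl t' b' # \<beta>) = (if t' = t \<and> b' = (\<not> b) then \<beta> else Kl t b # Kl t' b' # \<beta>)"
| "kact t b \<omega> = Kl t b # \<omega>"

fun kwact :: "(nat\<times>nat) fword \<Rightarrow> syl list \<Rightarrow> syl list" where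
  "kwact [] \<omega> = \<omega>"
| "kwact ((t,b) # w) \<omega> = kact t b (kwact w \<omega>)"

lemma kwact_app: "kwact (u @ v) \<omega> = kwact u (kwact v \<omega>)"
  by (induction u) auto

lemma red_tail: "red (x # \<beta>) \<Longrightarrow> red \<beta>"
  by (cases x; cases \<beta>; case_tac "hd \<beta>"; auto)

lemma kact_kact: "red \<omega> \<Longrightarrow> kact t (\<not> b) (kact t b \<omega>) = \<omega>"
proof (cases \<omega>)
  case (Cons x \<beta>)
  assume r: "red \<omega>"
  show ?thesis
  proof (cases x)
    case (Kl t' b')
    show ?thesis
    proof (cases "t' = t \<and> b' = (\<not> b)")
      case True
      show ?thesis
      proof (cases \<beta>)
        case Nil then show ?thesis using Cons Kl True by simp
      next
        case c2: (Cons y \<gamma>)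
        then show ?thesis using Cons Kl True r by (cases y) auto
      qed
    qed (use Cons Kl in auto)
  qed (use Cons in auto)
qed auto

lemma red_kact: "red \<omega> \<Longrightarrow> red (kact t b \<omega>)"
proof (cases \<omega>)
  case (Cons x \<beta>)
  then show "red \<omega> \<Longrightarrow> ?thesis" by (cases x) (auto dest: red_tail)
qed auto

lemma set_kact: "set (kact t b \<omega>) \<subseteq> insert (Kl t b) (set \<omega>)"
  by (cases \<omega>; case_tac "hd \<omega>"; auto)

lemma invar_kact: "invar \<omega> \<Longrightarrow> invar (kact t b \<omega>)"
  unfolding invar_def using red_kact set_kact by blast

lemma invar_kwact: "invar \<omega> \<Longrightarrow> invar (kwact w \<omega>)"
  by (induction w) (auto intro: invar_kact)

lemma kwact_inv: "invar \<omega> \<Longrightarrow> kwact (inv_word w) (kwact w \<omega>) = \<omega>"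
proof (induction w arbitrary: \<omega>)
  case Nil then show ?case by (simp add: inv_word_def)
next
  case (Cons a w)
  obtain t b where a: "a = (t,b)" by (cases a)
  have "kwact (inv_word (a # w)) (kwact (a # w) \<omega>) = kwact (inv_word w) (kact t (\<not> b) (kact t b (kwact w \<omega>)))"
    using a by (simp add: inv_word_Cons kwact_app)
  also have "\<dots> = kwact (inv_word w) (kwact w \<omega>)"
    using invar_kwact[OF Cons.prems, of w] by (simp add: invar_def kact_kact)
  also have "\<dots> = \<omega>" using Cons by simp
  finally show ?case .
qed


definition noH :: "syl list \<Rightarrow> bool" where
  "noH \<beta> \<longleftrightarrow> (\<forall>a \<gamma>. \<beta> \<noteq> Hs a # \<gamma>)"

lemma actH_noH: "noH \<beta> \<Longrightarrow> actH u \<beta> = (if triv u then \<beta> else Hs (cls u) # \<beta>)"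
  unfolding noH_def by (cases \<beta>; case_tac "hd \<beta>"; auto)

lemma red_Hs: "red (Hs a # \<beta>) \<Longrightarrow> noH \<beta> \<and> red \<beta>"
  unfolding noH_def by (cases \<beta>; case_tac "hd \<beta>"; auto)

lemma red_Hs_intro: "noH \<beta> \<Longrightarrow> red \<beta> \<Longrightarrow> red (Hs a # \<beta>)"
  unfolding noH_def by (cases \<beta>; case_tac "hd \<beta>"; auto)

lemma Hcls_E: "Hcls a \<Longrightarrow> (\<And>w. a = cls w \<Longrightarrow> Hgood w \<Longrightarrow> cls w \<noteq> cls [] \<Longrightarrow> P) \<Longrightarrow> P"
  unfolding Hcls_def by blast

lemma invar_HsE: "invar (Hs a # \<beta>) \<Longrightarrow>
   (\<And>w. a = cls w \<Longrightarrow> Hgood w \<Longrightarrow> cls w \<noteq> cls [] \<Longrightarrow> noH \<beta> \<Longrightarrow> invar \<beta> \<Longrightarrow> P) \<Longrightarrow> P"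
  unfolding invar_def using red_Hs Hcls_E by (metis list.set_intros(1) list.set_intros(2))

lemma not_noH: "\<not> noH \<omega> \<Longrightarrow> (\<And>a \<beta>. \<omega> = Hs a # \<beta> \<Longrightarrow> P) \<Longrightarrow> P"
  unfolding noH_def by blast

lemma actH_actH: "invar \<omega> \<Longrightarrow> actH u (actH v \<omega>) = actH (u @ v) \<omega>"
proof (cases "noH \<omega>")
  case True
  show ?thesis
  proof (cases "cls v = cls []")
    case c: True
    have "cls (u @ v) = cls u" using c by (rule cls_triv_r)
    then show ?thesis using c True by (simp add: actH_noH triv_cls)
  next
    case False then show ?thesis using True by (simp add: actH_noH triv_cls)
  qed
next
  case False
  assume inv: "invar \<omega>"
  from False obtain a \<beta> where o: "\<omega> = Hs a # \<beta>" by (rule not_noH)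
  from inv[unfolded o] obtain w where a: "a = cls w" and nb: "noH \<beta>" by (rule invar_HsE)
  show ?thesis
  proof (cases "cls (v @ w) = cls []")
    case c: True
    have "cls (u @ v @ w) = cls u" using c by (rule cls_triv_r)
    then show ?thesis using c by (simp add: o a nb actH_noH triv_cls)
  next
    case False then show ?thesis by (simp add: o a nb actH_noH triv_cls)
  qed
qed

lemma actH_triv: "invar \<omega> \<Longrightarrow> triv u \<Longrightarrow> actH u \<omega> = \<omega>"
proof (cases "noH \<omega>")
  case True
  then show "triv u \<Longrightarrow> ?thesis" by (simp add: actH_noH)
next
  case False
  assume inv: "invar \<omega>" and t: "triv u"
  from False obtain a \<beta> where o: "\<omega> = Hs a # \<beta>" by (rule not_noH)
  from inv[unfolded o] obtain w where a: "a = cls w" and "cls w \<noteq> cls []" by (rule invar_HsE)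
  then show ?thesis using t by (auto simp: o a triv_cls cls_triv_l)
qed

lemma invar_actH: "invar \<omega> \<Longrightarrow> Hgood u \<Longrightarrow> invar (actH u \<omega>)"
proof (cases "noH \<omega>")
  case True
  assume inv: "invar \<omega>" and g: "Hgood u"
  show ?thesis
  proof (cases "triv u")
    case True then show ?thesis using \<open>noH \<omega>\<close> inv by (simp add: actH_noH)
  next
    case False
    have "Hcls (cls u)" unfolding Hcls_def using g False triv_cls by blast
    moreover have "red (Hs (cls u) # \<omega>)" using red_Hs_intro \<open>noH \<omega>\<close> inv invar_def by blast
    ultimately show ?thesis using inv False \<open>noH \<omega>\<close> unfolding invar_def by (simp add: actH_noH)
  qed
next
  case False
  assume inv: "invar \<omega>" and g: "Hgood u"
  from False obtain a \<beta> where o: "\<omega> = Hs a # \<beta>" by (rule not_noH)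
  from inv[unfolded o] obtain w where a: "a = cls w" and "Hgood w" and nb: "noH \<beta>" and ib: "invar \<beta>"
    by (rule invar_HsE)
  then have hg: "Hgood (u @ w)" using g Hgood_app by blast
  have e: "actH u \<omega> = (if cls (u @ w) = cls [] then \<beta> else Hs (cls (u @ w)) # \<beta>)"
    by (simp add: o a triv_cls)
  show ?thesis
  proof (cases "cls (u @ w) = cls []")
    case True then show ?thesis using e ib by simp
  next
    case False
    have "Hcls (cls (u @ w))" unfolding Hcls_def using hg False by blast
    moreover have "red (Hs (cls (u @ w)) # \<beta>)" using red_Hs_intro nb ib invar_def by blast
    ultimately show ?thesis using e ib False unfolding invar_def by simp
  qed
qed


definition Pw :: "nat \<Rightarrow> (nat\<times>nat) fword" where
  "Pw i = map (\<lambda>j. ((j,i),False)) [0..<C-1]"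
definition Aw :: "nat \<Rightarrow> (nat\<times>nat) fword" where
  "Aw i = pos_word (A_word C i)"

lemma Aw_Pw: "Aw i = Pw i @ [((C-1,i),False)]"
proof -
  have "[0..<C] = [0..<C-1] @ [C-1]" using C1
    by (cases C) auto
  then show ?thesis by (simp add: Aw_def Pw_def pos_word_def A_word_def)
qed

lemma A_product_Cons: "A_product C ((i,e) # xs) = (if e then inv_word (Aw i) else Aw i) @ A_product C xs"
  by (simp add: A_product_def Aw_def)

lemma A_product_app: "A_product C (xs @ ys) = A_product C xs @ A_product C ys"
  by (simp add: A_product_def)

lemma Hgood_Aprod: "\<forall>(i,e)\<in>set xs. i < m \<Longrightarrow> Hgood (A_product C xs)"
  unfolding Hgood_def by (blast intro: pres_eq.refl)

lemma Hgood_Aw: "i < m \<Longrightarrow> Hgood (Aw i)"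
  using Hgood_Aprod[of "[(i,False)]"] by (simp add: A_product_def Aw_def)

lemma Hgood_invAw: "i < m \<Longrightarrow> Hgood (inv_word (Aw i))"
  using Hgood_Aprod[of "[(i,True)]"] by (simp add: A_product_def Aw_def)

fun lact :: "(nat\<times>nat)\<times>bool \<Rightarrow> syl list \<Rightarrow> syl list" where
  "lact ((j,i),b) \<omega> = (if j < C \<and> i < m then
      (if Suc j < C then kact (j,i) b \<omega>
       else if b then actH (inv_word (Aw i)) (kwact (Pw i) \<omega>)
       else kwact (inv_word (Pw i)) (actH (Aw i) \<omega>)) else \<omega>)"

fun act :: "(nat\<times>nat) fword \<Rightarrow> syl list \<Rightarrow> syl list" where
  "act [] \<omega> = \<omega>"
| "act (s # w) \<omega> = lact s (act w \<omega>)"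

lemma act_app: "act (u @ v) \<omega> = act u (act v \<omega>)"
  by (induction u) auto

lemma invar_lact0: "invar \<omega> \<Longrightarrow> invar (lact ((j,i),b) \<omega>)"
  by (simp add: invar_kact invar_kwact invar_actH Hgood_Aw Hgood_invAw)

lemma invar_lact: "invar \<omega> \<Longrightarrow> invar (lact s \<omega>)"
  using invar_lact0 by (metis prod.collapse)

lemma lact_lastF: "i < m \<Longrightarrow> lact ((C-1,i),False) \<omega> = kwact (inv_word (Pw i)) (actH (Aw i) \<omega>)"
  using C1 by simp
lemma lact_lastT: "i < m \<Longrightarrow> lact ((C-1,i),True) \<omega> = actH (inv_word (Aw i)) (kwact (Pw i) \<omega>)"
  using C1 by simp

lemma invar_act: "invar \<omega> \<Longrightarrow> invar (act w \<omega>)"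
  by (induction w) (auto intro: invar_lact)

lemma kwact_inv2: "invar \<omega> \<Longrightarrow> kwact w (kwact (inv_word w) \<omega>) = \<omega>"
  using kwact_inv[of \<omega> "inv_word w"] by simp

lemma triv_inv_l: "triv (inv_word w @ w)"
  by (simp add: triv_def pe_inv_l)
lemma triv_inv_r: "triv (w @ inv_word w)"
  by (simp add: triv_def pe_inv_r)

lemma lact_inv: "invar \<omega> \<Longrightarrow> lact (x, \<not> b) (lact (x, b) \<omega>) = \<omega>"
proof -
  assume inv: "invar \<omega>"
  obtain j i where x: "x = (j,i)" by (cases x)
  show ?thesis
  proof (cases "j < C \<and> i < m \<and> Suc j < C")
    case True
    have "\<And>c \<mu>. lact (x,c) \<mu> = kact (j,i) c \<mu>" using True x by simp
    then show ?thesis using inv kact_kact invar_def by simp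
  next
    case F: False
    show ?thesis
    proof (cases "j < C \<and> i < m")
      case True
      show ?thesis
      proof (cases b)
        case True
        have "lact (x, \<not> b) (lact (x, b) \<omega>) =
           kwact (inv_word (Pw i)) (actH (Aw i) (actH (inv_word (Aw i)) (kwact (Pw i) \<omega>)))"
          using x True F \<open>j < C \<and> i < m\<close> by (simp del: actH.simps kwact.simps)
        also have "\<dots> = kwact (inv_word (Pw i)) (kwact (Pw i) \<omega>)"
          using inv by (simp add: actH_actH invar_kwact actH_triv triv_inv_r)
        also have "\<dots> = \<omega>" using inv by (simp add: kwact_inv)
        finally show ?thesis .
      next
        case False
        have "lact (x, \<not> b) (lact (x, b) \<omega>) =
           actH (inv_word (Aw i)) (kwact (Pw i) (kwact (inv_word (Pw i)) (actH (Aw i) \<omega>)))"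
          using x False F \<open>j < C \<and> i < m\<close> by (simp del: actH.simps kwact.simps)
        also have "\<dots> = actH (inv_word (Aw i)) (actH (Aw i) \<omega>)"
          using inv by (simp add: kwact_inv2 invar_actH Hgood_Aw \<open>j < C \<and> i < m\<close>)
        also have "\<dots> = \<omega>" using inv by (simp add: actH_actH actH_triv triv_inv_l)
        finally show ?thesis .
      qed
    next
      case False
      have "\<And>c \<mu>. lact (x,c) \<mu> = \<mu>" using False x by auto
      then show ?thesis by simp
    qed
  qed
qed

lemma act_K: "\<forall>((j,i),b)\<in>set w. Suc j < C \<and> i < m \<Longrightarrow> act w \<omega> = kwact w \<omega>"
proof (induction w)
  case Nil then show ?case by simp
next
  case (Cons a w)
  obtain j i b where a: "a = ((j,i),b)" by (metis prod.collapse)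
  have "Suc j < C" "i < m" using Cons.prems a by auto
  then show ?case using Cons a by simp
qed

lemma Pw_K: "\<forall>((j,i'),b)\<in>set (Pw i). Suc j < C \<and> i' < m" if "i < m"
  using that by (auto simp: Pw_def)

lemma invPw_K: "\<forall>((j,i'),b)\<in>set (inv_word (Pw i)). Suc j < C \<and> i' < m" if "i < m"
  using that by (auto simp: Pw_def inv_word_def)

lemma act_Aw: "i < m \<Longrightarrow> invar \<omega> \<Longrightarrow> act (Aw i) \<omega> = actH (Aw i) \<omega>"
proof -
  assume i: "i < m" and inv: "invar \<omega>"
  have "act (Aw i) \<omega> = act (Pw i) (act [((C-1,i),False)] \<omega>)"
    by (simp only: Aw_Pw act_app)
  also have "\<dots> = kwact (Pw i) (kwact (inv_word (Pw i)) (actH (Aw i) \<omega>))"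
    using i by (simp only: act_K[OF Pw_K[OF i]] act.simps lact_lastF)
  also have "\<dots> = actH (Aw i) \<omega>" using inv i by (simp add: kwact_inv2 invar_actH Hgood_Aw)
  finally show ?thesis .
qed

lemma invAw: "inv_word (Aw i) = [((C-1,i),True)] @ inv_word (Pw i)"
  by (simp add: Aw_Pw inv_word_app) (simp add: inv_word_def)

lemma act_invAw: "i < m \<Longrightarrow> invar \<omega> \<Longrightarrow> act (inv_word (Aw i)) \<omega> = actH (inv_word (Aw i)) \<omega>"
proof -
  assume i: "i < m" and inv: "invar \<omega>"
  have "act (inv_word (Aw i)) \<omega> = act [((C-1,i),True)] (act (inv_word (Pw i)) \<omega>)"
    by (simp only: invAw act_app)
  also have "\<dots> = actH (inv_word (Aw i)) (kwact (Pw i) (kwact (inv_word (Pw i)) \<omega>))"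
    using i by (simp only: act_K[OF invPw_K[OF i]] act.simps lact_lastT)
  also have "\<dots> = actH (inv_word (Aw i)) \<omega>" using inv i by (simp add: kwact_inv2)
  finally show ?thesis .
qed


lemma act_Aprod: "\<forall>(i,e)\<in>set xs. i < m \<Longrightarrow> invar \<omega> \<Longrightarrow> act (A_product C xs) \<omega> = actH (A_product C xs) \<omega>"
proof (induction xs)
  case Nil then show ?case by (simp add: A_product_def actH_triv triv_def pres_eq.refl)
next
  case (Cons p xs)
  obtain i e where p: "p = (i,e)" by (cases p)
  have i: "i < m" and xs: "\<forall>(i,e)\<in>set xs. i < m" using Cons.prems p by auto
  have IH: "act (A_product C xs) \<omega> = actH (A_product C xs) \<omega>" using Cons.IH xs Cons.prems by blast
  have iv: "invar (actH (A_product C xs) \<omega>)" using Cons.prems(2) Hgood_Aprod[OF xs] by (rule invar_actH)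
  show ?case
  proof (cases e)
    case True
    then show ?thesis using p IH iv i Cons.prems(2)
      by (simp add: A_product_Cons act_app act_invAw actH_actH)
  next
    case False
    then show ?thesis using p IH iv i Cons.prems(2)
      by (simp add: A_product_Cons act_app act_Aw actH_actH)
  qed
qed

lemma rel_Aprod: "pos_word (rel_C C r) = A_product C (map (\<lambda>i. (i,False)) r)"
  by (induction r) (simp_all add: rel_C_def pos_word_def A_product_def)

lemma act_rel: "r \<in> R \<Longrightarrow> invar \<omega> \<Longrightarrow> act r \<omega> = \<omega>"
proof -
  assume r: "r \<in> R" and inv: "invar \<omega>"
  then obtain r0 where r0: "r0 \<in> S" and rr: "r = pos_word (rel_C C r0)"
    by (auto simp: relators_C_def)
  have rng: "\<forall>(i,e)\<in>set (map (\<lambda>i. (i,False)) r0). i < m" using Sok r0 by auto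
  have "act r \<omega> = actH r \<omega>" using act_Aprod[OF rng inv] rr rel_Aprod by simp
  moreover have "triv r" unfolding triv_def using pres_eq.rel[OF r, of "[]" "[]"] by simp
  ultimately show ?thesis using actH_triv inv by simp
qed

lemma act_resp0: "pres_eq R u v \<Longrightarrow> \<forall>\<omega>. invar \<omega> \<longrightarrow> act u \<omega> = act v \<omega>"
proof (induction rule: pres_eq.induct)
  case (cancel u x b v)
  show ?case
  proof (intro allI impI)
    fix \<omega> assume "invar \<omega>"
    then have "invar (act v \<omega>)" by (rule invar_act)
    then show "act (u @ [(x, b), (x, \<not> b)] @ v) \<omega> = act (u @ v) \<omega>"
      using lact_inv[of "act v \<omega>" x "\<not> b"] by (simp add: act_app)
  qed
next
  case (rel r u v)
  show ?case
  proof (intro allI impI)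
    fix \<omega> assume "invar \<omega>"
    then have "invar (act v \<omega>)" by (rule invar_act)
    then show "act (u @ r @ v) \<omega> = act (u @ v) \<omega>"
      using act_rel[OF rel] by (simp add: act_app)
  qed
qed (auto intro: invar_act)

lemma act_resp: "pres_eq R u v \<Longrightarrow> invar \<omega> \<Longrightarrow> act u \<omega> = act v \<omega>"
  using act_resp0 by blast

fun wd :: "syl \<Rightarrow> (nat\<times>nat) fword" where
  "wd (Kl t b) = [(t,b)]"
| "wd (Hs a) = rep a"

definition word :: "syl list \<Rightarrow> (nat\<times>nat) fword" where
  "word \<omega> = concat (map wd \<omega>)"

lemma word_simps[simp]: "word [] = []" "word (x # \<beta>) = wd x @ word \<beta>"
  by (simp_all add: word_def)

lemma cls_cancel_pair: "cls ((t,b) # (t, \<not> b) # w) = cls w"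
  unfolding cls_eq using pres_eq.cancel[of R "[]" t b w] by simp

lemma word_kact: "cls (word (kact t b \<omega>)) = cls ((t,b) # word \<omega>)"
proof (cases \<omega>)
  case (Cons x \<beta>)
  then show ?thesis
  proof (cases x)
    case (Kl t' b')
    then show ?thesis using Cons
      by (cases "t' = t \<and> b' = (\<not> b)") (auto simp: cls_cancel_pair)
  qed simp
qed simp

lemma word_kwact: "cls (word (kwact w \<omega>)) = cls (w @ word \<omega>)"
proof (induction w)
  case (Cons a w)
  obtain t b where a: "a = (t,b)" by (cases a)
  have "cls (word (kwact (a # w) \<omega>)) = cls ([(t,b)] @ word (kwact w \<omega>))"
    using a word_kact by simp
  also have "\<dots> = cls ([(t,b)] @ w @ word \<omega>)" using Cons.IH by (rule cls_cong_l)
  finally show ?case using a by simp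
qed simp

lemma cls_triv_l3: "cls (u @ w) = cls [] \<Longrightarrow> cls (u @ w @ d) = cls d"
  using cls_triv_l[of "u @ w" d] by simp
lemma cls_triv_r3: "cls (w @ d) = cls [] \<Longrightarrow> cls (u @ w @ d) = cls u"
  using cls_triv_r[of "w @ d" u] by simp

lemma word_actH: "invar \<omega> \<Longrightarrow> cls (word (actH u \<omega>)) = cls (u @ word \<omega>)"
proof (cases "noH \<omega>")
  case True
  then show ?thesis
    by (cases "cls u = cls []") (simp_all add: actH_noH triv_cls cls_triv_l)
next
  case False
  assume inv: "invar \<omega>"
  from False obtain a \<beta> where o: "\<omega> = Hs a # \<beta>" by (rule not_noH)
  from inv[unfolded o] obtain w where a: "a = cls w" by (rule invar_HsE)
  show ?thesis
  proof (cases "cls (u @ w) = cls []")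
    case True
    then show ?thesis by (simp add: o a triv_cls cls_triv_l3)
  next
    case False
    then show ?thesis by (simp add: o a triv_cls)
  qed
qed


lemma word_lact: "j < C \<Longrightarrow> i < m \<Longrightarrow> invar \<omega> \<Longrightarrow> cls (word (lact ((j,i),b) \<omega>)) = cls (((j,i),b) # word \<omega>)"
proof -
  assume j: "j < C" and i: "i < m" and inv: "invar \<omega>"
  show ?thesis
  proof (cases "Suc j < C")
    case True then show ?thesis using j i by (simp add: word_kact)
  next
    case False
    then have jC: "j = C - 1" using j by simp
    show ?thesis
    proof (cases b)
      case True
      have "cls (word (lact ((j,i),b) \<omega>)) = cls (word (actH (inv_word (Aw i)) (kwact (Pw i) \<omega>)))"
        using j i False True by (simp del: actH.simps kwact.simps)
      also have "\<dots> = cls (inv_word (Aw i) @ word (kwact (Pw i) \<omega>))"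
        using inv invar_kwact word_actH by blast
      also have "\<dots> = cls (inv_word (Aw i) @ Pw i @ word \<omega>)"
        using word_kwact by (rule cls_cong_l)
      also have "\<dots> = cls ([((C-1,i),True)] @ (inv_word (Pw i) @ Pw i) @ word \<omega>)"
        by (simp add: invAw)
      also have "\<dots> = cls ([((C-1,i),True)] @ [] @ word \<omega>)"
        by (rule cls_cong_l, rule cls_cong_r) (simp add: cls_eq pe_inv_l)
      finally show ?thesis using jC True by simp
    next
      case False
      have "cls (word (lact ((j,i),b) \<omega>)) = cls (word (kwact (inv_word (Pw i)) (actH (Aw i) \<omega>)))"
        using j i False \<open>\<not> Suc j < C\<close> by (simp del: actH.simps kwact.simps)
      also have "\<dots> = cls (inv_word (Pw i) @ word (actH (Aw i) \<omega>))"
        by (rule word_kwact)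
      also have "\<dots> = cls (inv_word (Pw i) @ Aw i @ word \<omega>)"
        using word_actH[OF inv] by (rule cls_cong_l)
      also have "\<dots> = cls ((inv_word (Pw i) @ Pw i) @ [((C-1,i),False)] @ word \<omega>)"
        by (simp add: Aw_Pw)
      also have "\<dots> = cls ([((C-1,i),False)] @ word \<omega>)"
        by (rule cls_triv_l) (simp add: cls_eq pe_inv_l)
      finally show ?thesis using jC False by simp
    qed
  qed
qed

lemma word_act: "is_word_YC C m w \<Longrightarrow> invar \<omega> \<Longrightarrow> cls (word (act w \<omega>)) = cls (w @ word \<omega>)"
proof (induction w)
  case (Cons s w)
  obtain j i b where s: "s = ((j,i),b)" by (metis prod.collapse)
  have ws: "is_word_YC C m w" and j: "j < C" and i: "i < m"
    using Cons.prems(1) s by (auto simp: is_word_YC_def)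
  have "cls (word (act (s # w) \<omega>)) = cls ([s] @ word (act w \<omega>))"
    using word_lact[OF j i invar_act[OF Cons.prems(2)]] s by simp
  also have "\<dots> = cls ([s] @ w @ word \<omega>)"
    using Cons.IH[OF ws Cons.prems(2)] by (rule cls_cong_l)
  finally show ?case by simp
qed simp

fun rmul :: "syl list \<Rightarrow> (nat\<times>nat) fword \<Rightarrow> syl list" where
  "rmul [] d = (if triv d then [] else [Hs (cls d)])"
| "rmul [Hs a] d = (if triv (rep a @ d) then [] else [Hs (cls (rep a @ d))])"
| "rmul (x # \<beta>) d = x # rmul \<beta> d"

lemma rmul_Kl[simp]: "rmul (Kl t b # \<beta>) d = Kl t b # rmul \<beta> d"
  by (cases \<beta>) auto

lemma rmul_Hs2[simp]: "rmul (Hs a # y # \<beta>) d = Hs a # rmul (y # \<beta>) d"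
  by simp

lemma rmul_noKl: "rmul (Hs a # \<beta>) d = [] \<or> (\<exists>a' \<gamma>. rmul (Hs a # \<beta>) d = Hs a' # \<gamma>)"
  by (cases \<beta>) auto

lemma rmul_nil_noKl: "rmul [] d = [] \<or> (\<exists>a' \<gamma>. rmul [] d = Hs a' # \<gamma>)"
  by auto

lemma kact_noKl: "\<mu> = [] \<or> (\<exists>a' \<gamma>. \<mu> = Hs a' # \<gamma>) \<Longrightarrow> kact t b \<mu> = Kl t b # \<mu>"
  by auto

lemma kact_rmul: "kact t b (rmul \<omega> d) = rmul (kact t b \<omega>) d"
proof (cases \<omega>)
  case Nil then show ?thesis using kact_noKl[OF rmul_nil_noKl] by simp
next
  case (Cons x \<beta>)
  then show ?thesis
  proof (cases x)
    case (Kl t' b')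
    then show ?thesis using Cons by auto
  next
    case (Hs a)
    then show ?thesis using Cons kact_noKl[OF rmul_noKl] by simp
  qed
qed

lemma kwact_rmul: "kwact w (rmul \<omega> d) = rmul (kwact w \<omega>) d"
  by (induction w) (auto simp: kact_rmul)


lemma actH_rmul: "invar \<omega> \<Longrightarrow> actH u (rmul \<omega> d) = rmul (actH u \<omega>) d"
proof (cases \<omega>)
  case Nil
  show ?thesis
  proof (cases "cls d = cls []")
    case d: True
    show ?thesis
    proof (cases "cls u = cls []")
      case True then show ?thesis using d Nil by (simp add: triv_cls)
    next
      case False
      have "cls (u @ d) = cls u" using d by (rule cls_triv_r)
      then show ?thesis using d Nil False by (simp add: triv_cls)
    qed
  next
    case d: False
    show ?thesis
    proof (cases "cls u = cls []")
      case True
      have "cls (u @ d) = cls d" using True by (rule cls_triv_l)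
      then show ?thesis using d Nil True by (simp add: triv_cls)
    next
      case False
      then show ?thesis using d Nil by (simp add: triv_cls)
    qed
  qed
next
  case (Cons x \<beta>)
  assume inv: "invar \<omega>"
  show ?thesis
  proof (cases x)
    case (Kl t b)
    then show ?thesis using Cons by (simp add: actH_noH noH_def)
  next
    case (Hs a)
    from inv[unfolded Cons Hs] obtain w where a: "a = cls w" and nb: "noH \<beta>" by (rule invar_HsE)
    show ?thesis
    proof (cases \<beta>)
      case (Cons y \<gamma>)
      then obtain t b where y: "y = Kl t b" using nb unfolding noH_def by (cases y) auto
      show ?thesis using Cons y \<open>\<omega> = x # \<beta>\<close> Hs by simp
    next
      case Nil
      show ?thesis
      proof (cases "cls (w @ d) = cls []")
        case wd: True
        have e1: "cls (u @ w @ d) = cls u" using wd by (rule cls_triv_r3)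
        show ?thesis
        proof (cases "cls (u @ w) = cls []")
          case True
          have "cls (u @ w @ d) = cls d" using True by (rule cls_triv_l3)
          then show ?thesis using e1 wd True Nil Hs \<open>\<omega> = x # \<beta>\<close> a by (simp add: triv_cls)
        next
          case False
          then show ?thesis using e1 wd Nil Hs \<open>\<omega> = x # \<beta>\<close> a by (simp add: triv_cls)
        qed
      next
        case wd: False
        show ?thesis
        proof (cases "cls (u @ w) = cls []")
          case True
          have "cls (u @ w @ d) = cls d" using True by (rule cls_triv_l3)
          then show ?thesis using wd True Nil Hs \<open>\<omega> = x # \<beta>\<close> a by (simp add: triv_cls)
        next
          case False
          then show ?thesis using wd Nil Hs \<open>\<omega> = x # \<beta>\<close> a by (simp add: triv_cls)
        qed
      qed
    qed
  qed
qed

lemma lact_rmul: "invar \<omega> \<Longrightarrow> lact s (rmul \<omega> d) = rmul (lact s \<omega>) d"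
proof -
  assume inv: "invar \<omega>"
  obtain j i b where s: "s = ((j,i),b)" by (metis prod.collapse)
  show ?thesis
  proof (cases "j < C \<and> i < m")
    case r: True
    show ?thesis
    proof (cases "Suc j < C")
      case True then show ?thesis using r s by (simp add: kact_rmul)
    next
      case F: False
      show ?thesis
      proof (cases b)
        case True
        have "lact s (rmul \<omega> d) = actH (inv_word (Aw i)) (kwact (Pw i) (rmul \<omega> d))"
          using s r F True by (simp del: actH.simps kwact.simps rmul.simps)
        also have "\<dots> = rmul (actH (inv_word (Aw i)) (kwact (Pw i) \<omega>)) d"
          using inv invar_kwact by (simp add: kwact_rmul actH_rmul del: actH.simps kwact.simps rmul.simps)
        also have "\<dots> = rmul (lact s \<omega>) d"
          using s r F True by (simp del: actH.simps kwact.simps rmul.simps)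
        finally show ?thesis .
      next
        case False
        have "lact s (rmul \<omega> d) = kwact (inv_word (Pw i)) (actH (Aw i) (rmul \<omega> d))"
          using s r F False by (simp del: actH.simps kwact.simps rmul.simps)
        also have "\<dots> = rmul (kwact (inv_word (Pw i)) (actH (Aw i) \<omega>)) d"
          using inv by (simp add: kwact_rmul actH_rmul del: actH.simps kwact.simps rmul.simps)
        also have "\<dots> = rmul (lact s \<omega>) d"
          using s r F False by (simp del: actH.simps kwact.simps rmul.simps)
        finally show ?thesis .
      qed
    qed
  next
    case False
    have "\<And>\<mu>. lact s \<mu> = \<mu>" using False s by auto
    then show ?thesis by simp
  qed
qed

lemma act_rmul: "invar \<omega> \<Longrightarrow> act w (rmul \<omega> d) = rmul (act w \<omega>) d"
  by (induction w) (simp_all add: lact_rmul invar_act del: rmul.simps lact.simps)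

lemma cls_cancel_r: "cls (u @ w) = cls (v @ w) \<Longrightarrow> cls u = cls v"
proof -
  assume h: "cls (u @ w) = cls (v @ w)"
  have "cls ((u @ w) @ inv_word w) = cls ((v @ w) @ inv_word w)"
    using cls_cong_r[OF h] by simp
  moreover have "cls (w @ inv_word w) = cls []" by (simp add: cls_eq pe_inv_r)
  ultimately show ?thesis using cls_triv_r3[of w "inv_word w"] by simp
qed

definition hasK :: "syl list \<Rightarrow> bool" where
  "hasK \<omega> \<longleftrightarrow> (\<exists>t b. Kl t b \<in> set \<omega>)"

lemma rmul_hd: "hasK \<omega> \<Longrightarrow> rmul \<omega> d \<noteq> [] \<and> hd (rmul \<omega> d) = hd \<omega>"
proof (cases \<omega>)
  case (Cons x \<beta>)
  assume h: "hasK \<omega>"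
  show ?thesis
  proof (cases x)
    case (Kl t b) then show ?thesis using Cons by simp
  next
    case (Hs a)
    then have "\<beta> \<noteq> []" using h Cons by (auto simp: hasK_def)
    then obtain y \<gamma> where "\<beta> = y # \<gamma>" by (cases \<beta>) auto
    then show ?thesis using Cons Hs by simp
  qed
qed (simp add: hasK_def)

lemma actH_hd: "invar \<omega> \<Longrightarrow> hasK \<omega> \<Longrightarrow> \<not> triv u \<Longrightarrow> actH u \<omega> = [] \<or> hd (actH u \<omega>) \<noteq> hd \<omega>"
proof (cases "noH \<omega>")
  case True
  assume "hasK \<omega>" "\<not> triv u"
  then show ?thesis using True by (simp add: actH_noH)
     (metis hasK_def empty_iff list.collapse list.set(1) noH_def syl.distinct(1))
next
  case False
  assume inv: "invar \<omega>" and h: "hasK \<omega>" and nt: "\<not> triv u"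
  from False obtain a \<beta> where o: "\<omega> = Hs a # \<beta>" by (rule not_noH)
  from inv[unfolded o] obtain w where a: "a = cls w" and nb: "noH \<beta>" by (rule invar_HsE)
  have "\<beta> \<noteq> []" using h o by (auto simp: hasK_def)
  then obtain y \<gamma> where b: "\<beta> = y # \<gamma>" by (cases \<beta>) auto
  then obtain t b where y: "y = Kl t b" using nb unfolding noH_def by (cases y) auto
  have "cls (u @ w) \<noteq> cls w"
  proof
    assume "cls (u @ w) = cls w"
    then have "cls (u @ w) = cls ([] @ w)" by simp
    then have "cls u = cls []" by (rule cls_cancel_r)
    then show False using nt by (simp add: triv_cls)
  qed
  then show ?thesis using o a b y by (simp add: triv_cls)
qed

lemma red_noK: "red \<omega> \<Longrightarrow> \<not> hasK \<omega> \<Longrightarrow> \<omega> = [] \<or> (\<exists>a. \<omega> = [Hs a])"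
proof (cases \<omega>)
  case (Cons x \<beta>)
  assume r: "red \<omega>" and nk: "\<not> hasK \<omega>"
  obtain a where x: "x = Hs a" using nk Cons by (cases x) (auto simp: hasK_def)
  show ?thesis
  proof (cases \<beta>)
    case (Cons y \<gamma>)
    obtain a' where "y = Hs a'" using nk Cons \<open>\<omega> = x # \<beta>\<close> by (cases y) (auto simp: hasK_def)
    then show ?thesis using r Cons \<open>\<omega> = x # \<beta>\<close> x by simp
  qed (use Cons x in simp)
qed simp


lemma invar_Nil: "invar []"
  by (simp add: invar_def)

lemma actH_Nil: "actH u [] = rmul [] u"
  by simp

end

theorem lemma3p5:
  fixes C m :: nat and S :: "nat list set"
    and g x :: "(nat \<times> nat) fword"
  assumes "C \<ge> 1"
    and "\<forall>r \<in> S. r \<noteq> [] \<and> set r \<subseteq> {..<m}"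
    and "is_word_YC C m g" and "\<not> in_Qtilde C m S g"
    and "is_word_YC C m x" and "in_Qtilde C m S x"
    and "in_Qtilde C m S (inv_word g @ x @ g)"
  shows "pres_eq (relators_C C S) x []"
proof (rule ccontr)
  assume nx: "\<not> pres_eq (relators_C C S) x []"
  interpret L: Lm C m S using assms(1,2) by unfold_locales auto
  let ?R = "relators_C C S"
  obtain xs where xs: "\<forall>(i,e)\<in>set xs. i < m" and xe: "pres_eq ?R x (A_product C xs)"
    using assms(6) unfolding in_Qtilde_def by blast
  obtain ys where ys: "\<forall>(i,e)\<in>set ys. i < m" and ye: "pres_eq ?R (inv_word g @ x @ g) (A_product C ys)"
    using assms(7) unfolding in_Qtilde_def by blast
  define N where "N = L.act g []"
  have invN: "L.invar N" unfolding N_def by (rule L.invar_act[OF L.invar_Nil])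
  have gN: "L.cls (L.word N) = L.cls g"
    unfolding N_def using L.word_act[OF assms(3) L.invar_Nil] by simp
  have hK: "L.hasK N"
  proof (rule ccontr)
    assume "\<not> L.hasK N"
    then have "N = [] \<or> (\<exists>a. N = [Hs a])" using L.red_noK invN L.invar_def by blast
    then have "in_Qtilde C m S g"
    proof
      assume "N = []"
      then have "pres_eq ?R g []" using gN L.cls_eq by (metis L.word_simps(1) pres_eq.sym)
      then show ?thesis unfolding in_Qtilde_def by (intro exI[of _ "[]"]) (simp add: A_product_def)
    next
      assume "\<exists>a. N = [Hs a]"
      then obtain a where Na: "N = [Hs a]" by blast
      then have "L.Hcls a" using invN L.invar_def by simp
      then obtain w where a: "a = L.cls w" and hw: "L.Hgood w" by (rule L.Hcls_E)
      have "L.cls g = L.cls w" using gN Na a by simp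
      then have "pres_eq ?R g w" using L.cls_eq by blast
      then show ?thesis using hw unfolding in_Qtilde_def L.Hgood_def by (blast intro: pres_eq.trans)
    qed
    then show False using assms(4) by blast
  qed
  have e1: "pres_eq ?R (x @ g) (g @ inv_word g @ x @ g)"
  proof -
    have "pres_eq ?R ((g @ inv_word g) @ (x @ g)) ([] @ (x @ g))"
      by (rule pe_app[OF pe_inv_r pres_eq.refl])
    then show ?thesis by (simp add: pres_eq.sym)
  qed
  have "L.act (x @ g) [] = L.act (g @ inv_word g @ x @ g) []"
    by (rule L.act_resp[OF e1 L.invar_Nil])
  moreover have "L.act (x @ g) [] = L.actH (A_product C xs) N"
    using L.act_resp[OF xe invN] L.act_Aprod[OF xs invN] by (simp add: L.act_app N_def)
  moreover have "L.act (g @ inv_word g @ x @ g) [] = L.rmul N (A_product C ys)"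
  proof -
    have "L.act (inv_word g @ x @ g) [] = L.rmul [] (A_product C ys)"
      using L.act_resp[OF ye L.invar_Nil] L.act_Aprod[OF ys L.invar_Nil] L.actH_Nil by simp
    then show ?thesis
      using L.act_rmul[OF L.invar_Nil] by (simp add: L.act_app N_def del: L.rmul.simps)
  qed
  moreover have "\<not> L.triv (A_product C xs)"
    using nx xe unfolding L.triv_def by (blast intro: pres_eq.trans)
  ultimately show False
    using L.rmul_hd[OF hK] L.actH_hd[OF invN hK] by metis
qed

end
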